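(* Let $G$ be a graph containing no cycle of length 6, let $x\in V(G)$, and let $A$ be a connected component of $G[N_2(x)]$. Then at least one of the following holds: (1) $|V(A)|=1$; (2) $|N(x)\cap N(V(A))|=1$; (3) $A$ is isomorphic to $K_{1,r}$ for some $r\ge 1$.
   Context: All graphs are finite, simple and undirected; "containing no cycle of length 6" means having no subgraph (not necessarily induced) isomorphic to $C_6$. $N_i(S)$ denotes the set of vertices at distance exactly $i$ from the vertex set $S$, $N(S)=N_1(S)$, $N(v)=N(\{v\})$, $N_2(v)=N_2(\{v\})$. *)

theory Defs
  imports Main
begin

definition simple_graph :: "'a set \<Rightarrow> ('a \<Rightarrow> 'a \<Rightarrow> bool) \<Rightarrow> bool" where
  "simple_graph V E \<longleftrightarrow> finite V \<and> (\<forall>u v. E u v \<longrightarrow> E v u)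
     \<and> (\<forall>v. \<not> E v v) \<and> (\<forall>u v. E u v \<longrightarrow> u \<in> V \<and> v \<in> V)"

definition has_C6 :: "'a set \<Rightarrow> ('a \<Rightarrow> 'a \<Rightarrow> bool) \<Rightarrow> bool" where
  "has_C6 V E \<longleftrightarrow> (\<exists>vs. length vs = 6 \<and> distinct vs \<and> set vs \<subseteq> V
     \<and> (\<forall>i<6. E (vs ! i) (vs ! ((i + 1) mod 6))))"

definition nbr :: "'a set \<Rightarrow> ('a \<Rightarrow> 'a \<Rightarrow> bool) \<Rightarrow> 'a \<Rightarrow> 'a set" where
  "nbr V E v = {u \<in> V. E v u}"

definition nbr_set :: "'a set \<Rightarrow> ('a \<Rightarrow> 'a \<Rightarrow> bool) \<Rightarrow> 'a set \<Rightarrow> 'a set" where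
  "nbr_set V E S = {u \<in> V. u \<notin> S \<and> (\<exists>w\<in>S. E w u)}"

definition nbr2 :: "'a set \<Rightarrow> ('a \<Rightarrow> 'a \<Rightarrow> bool) \<Rightarrow> 'a \<Rightarrow> 'a set" where
  "nbr2 V E x = {v \<in> V. v \<noteq> x \<and> \<not> E x v \<and> (\<exists>u. E x u \<and> E u v)}"

definition induced_component :: "'a set \<Rightarrow> ('a \<Rightarrow> 'a \<Rightarrow> bool) \<Rightarrow> 'a set \<Rightarrow> 'a set \<Rightarrow> bool" where
  "induced_component V E S C \<longleftrightarrow> S \<subseteq> V \<and>
     (\<exists>u\<in>S. C = {v. (\<lambda>a b. E a b \<and> a \<in> S \<and> b \<in> S)\<^sup>*\<^sup>* u v})"

definition induced_star :: "'a set \<Rightarrow> ('a \<Rightarrow> 'a \<Rightarrow> bool) \<Rightarrow> 'a set \<Rightarrow> nat \<Rightarrow> bool" where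
  "induced_star V E S r \<longleftrightarrow> finite S \<and> (\<exists>c\<in>S. card (S - {c}) = r \<and>
     (\<forall>u\<in>S. \<forall>v\<in>S. E u v \<longleftrightarrow> ((u = c \<and> v \<noteq> c) \<or> (v = c \<and> u \<noteq> c))))"

end

theory Submission
  imports Defs
begin

definition Rel :: "('a \<Rightarrow> 'a \<Rightarrow> bool) \<Rightarrow> 'a set \<Rightarrow> 'a \<Rightarrow> 'a \<Rightarrow> bool" where
  "Rel E S a b \<longleftrightarrow> E a b \<and> a \<in> S \<and> b \<in> S"

lemma sg_sym: "simple_graph V E \<Longrightarrow> E a b \<Longrightarrow> E b a"
  by (simp add: simple_graph_def)
lemma sg_irr: "simple_graph V E \<Longrightarrow> \<not> E a a"
  by (simp add: simple_graph_def)
lemma sg_V: "simple_graph V E \<Longrightarrow> E a b \<Longrightarrow> a \<in> V \<and> b \<in> V"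
  by (simp add: simple_graph_def)

lemma c6I:
  assumes "distinct [v0,v1,v2,v3,v4,v5]" "{v0,v1,v2,v3,v4,v5} \<subseteq> V"
    "E v0 v1" "E v1 v2" "E v2 v3" "E v3 v4" "E v4 v5" "E v5 v0"
  shows "has_C6 V E"
  unfolding has_C6_def
proof (intro exI[of _ "[v0,v1,v2,v3,v4,v5]"] conjI allI impI)
  fix i :: nat assume "i < 6"
  then have "i = 0 \<or> i = 1 \<or> i = 2 \<or> i = 3 \<or> i = 4 \<or> i = 5" by auto
  then show "E ([v0,v1,v2,v3,v4,v5] ! i) ([v0,v1,v2,v3,v4,v5] ! ((i + 1) mod 6))"
    using assms by auto
qed (use assms in auto)

lemma N2D: "v \<in> nbr2 V E x \<Longrightarrow> v \<noteq> x \<and> \<not> E x v \<and> v \<in> V \<and> (\<exists>u. E x u \<and> E u v)"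
  by (auto simp: nbr2_def)

lemma L1:
  assumes sg: "simple_graph V E" and nc: "\<not> has_C6 V E"
    and N: "a \<in> nbr2 V E x" "b \<in> nbr2 V E x" "c \<in> nbr2 V E x"
    and e: "E a b" "E b c" "a \<noteq> c" "E x u" "E x w" "E u a" "E w c" "u \<noteq> w"
  shows False
proof -
  have "has_C6 V E"
  proof (rule c6I[of x u a b c w])
    show "distinct [x, u, a, b, c, w]"
      using N e sg_irr[OF sg] N2D[OF N(1)] N2D[OF N(2)] N2D[OF N(3)] by auto
    show "{x, u, a, b, c, w} \<subseteq> V"
      using e sg_V[OF sg] by blast
  qed (use e sg_sym[OF sg] in auto)
  with nc show False by simp
qed

lemma L2:
  assumes sg: "simple_graph V E" and nc: "\<not> has_C6 V E"
    and N: "a \<in> nbr2 V E x" "b \<in> nbr2 V E x" "c \<in> nbr2 V E x" "d \<in> nbr2 V E x"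
    and e: "E a b" "E b c" "E c d" "a \<noteq> c" "b \<noteq> d" "a \<noteq> d"
      "E x u" "E x w" "E u a" "E u c" "E w b" "E w d" "u \<noteq> w"
  shows False
proof -
  have "has_C6 V E"
  proof (rule c6I[of u a b w d c])
    show "distinct [u, a, b, w, d, c]"
      using N e sg_irr[OF sg] N2D[OF N(1)] N2D[OF N(2)] N2D[OF N(3)] N2D[OF N(4)] by auto
    show "{u, a, b, w, d, c} \<subseteq> V"
      using e sg_V[OF sg] by blast
  qed (use e sg_sym[OF sg] in auto)
  with nc show False by simp
qed

lemma Rel_sym: "simple_graph V E \<Longrightarrow> Rel E S a b \<Longrightarrow> Rel E S b a"
  by (auto simp: Rel_def sg_sym)

lemma rt_sym:
  assumes sg: "simple_graph V E" and "(Rel E S)\<^sup>*\<^sup>* a b"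
  shows "(Rel E S)\<^sup>*\<^sup>* b a"
  using assms(2)
proof (induction rule: rtranclp_induct)
  case base then show ?case by simp
next
  case (step y z)
  then show ?case using Rel_sym[OF sg] by (meson converse_rtranclp_into_rtranclp)
qed

lemma rt_mem:
  assumes "(Rel E S)\<^sup>*\<^sup>* a b" "a \<in> S" shows "b \<in> S"
  using assms by (induction rule: rtranclp_induct) (auto simp: Rel_def)

lemma star_lemma:
  assumes sg: "simple_graph V E" and nc: "\<not> has_C6 V E"
    and A: "A = {v. (Rel E (nbr2 V E x))\<^sup>*\<^sup>* a v}"
    and ab: "Rel E (nbr2 V E x) a b" and e: "E x u" "E x w" "E u a" "E w b" "u \<noteq> w"
    and bonly: "\<forall>y. Rel E (nbr2 V E x) b y \<longrightarrow> y = a"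
  shows "\<exists>r\<ge>1. induced_star V E A r"
proof -
  let ?N = "nbr2 V E x"
  let ?R = "Rel E ?N"
  have aN: "a \<in> ?N" and bN: "b \<in> ?N" and Eab: "E a b" using ab by (auto simp: Rel_def)
  have claim: "v = a \<or> (?R a v \<and> (\<forall>y. ?R v y \<longrightarrow> y = a))" if "?R\<^sup>*\<^sup>* a v" for v
    using that
  proof (induction rule: rtranclp_induct)
    case base then show ?case by simp
  next
    case (step v v')
    show ?case
    proof (cases "v = a")
      case True
      have av': "?R a v'" using step.hyps(2) True by simp
      show ?thesis
      proof (cases "v' = b")
        case True then show ?thesis using av' bonly by blast
      next
        case False
        have v'N: "v' \<in> ?N" and Eav': "E a v'" using av' by (auto simp: Rel_def)
        have v'a: "v' \<noteq> a" using Eav' sg_irr[OF sg] by auto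
        have "\<forall>y. ?R v' y \<longrightarrow> y = a"
        proof (intro allI impI, rule ccontr)
          fix e assume Re: "?R v' e" and ea: "e \<noteq> a"
          have eN: "e \<in> ?N" and Ev'e: "E v' e" using Re by (auto simp: Rel_def)
          have eb: "e \<noteq> b"
          proof
            assume "e = b"
            then have "?R b v'" using Re Rel_sym[OF sg] by blast
            then show False using bonly v'a by auto
          qed
          obtain z where z: "E x z" "E z v'" using N2D[OF v'N] by blast
          have zw: "z = w"
          proof (rule ccontr)
            assume "z \<noteq> w"
            show False
              using L1[OF sg nc v'N aN bN sg_sym[OF sg Eav'] Eab False z(1) e(2) z(2) e(4) \<open>z \<noteq> w\<close>] .
          qed
          obtain z' where z': "E x z'" "E z' e" using N2D[OF eN] by blast
          have z'u: "z' = u"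
          proof (rule ccontr)
            assume "z' \<noteq> u"
            show False
              using L1[OF sg nc eN v'N aN sg_sym[OF sg Ev'e] sg_sym[OF sg Eav'] ea z'(1) e(1) z'(2) e(3) \<open>z' \<noteq> u\<close>] .
          qed
          show False
          proof -
            have "E u e" using z'(2) z'u by simp
            moreover have "E w v'" using z(2) zw by simp
            ultimately show False
              using L2[OF sg nc eN v'N aN bN sg_sym[OF sg Ev'e] sg_sym[OF sg Eav'] Eab ea False eb e(1) e(2) _ e(3) _ e(4) e(5)] by blast
          qed
        qed
        then show ?thesis using av' by blast
      qed
    next
      case False
      with step show ?thesis by blast
    qed
  qed
  have AN: "A \<subseteq> ?N"
  proof
    fix v assume "v \<in> A"
    then have "?R\<^sup>*\<^sup>* a v" using A by simp
    from rt_mem[OF this aN] show "v \<in> ?N" .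
  qed
  have fin: "finite A"
  proof -
    have "?N \<subseteq> V" by (auto simp: nbr2_def)
    moreover have "finite V" using sg by (simp add: simple_graph_def)
    ultimately have "finite ?N" by (rule finite_subset)
    then show ?thesis using AN by (rule finite_subset[rotated])
  qed
  have aA: "a \<in> A" using A by simp
  have bA: "b \<in> A" using A ab by auto
  have edges: "E p q \<longleftrightarrow> ((p = a \<and> q \<noteq> a) \<or> (q = a \<and> p \<noteq> a))" if "p \<in> A" "q \<in> A" for p q
  proof
    assume Epq: "E p q"
    have pq: "p \<noteq> q" using Epq sg_irr[OF sg] by auto
    have "?R p q" using Epq that AN by (auto simp: Rel_def)
    moreover have "p = a \<or> (\<forall>y. ?R p y \<longrightarrow> y = a)"
    proof -
      have "?R\<^sup>*\<^sup>* a p" using that(1) A by simp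
      from claim[OF this] show ?thesis by blast
    qed
    ultimately show "(p = a \<and> q \<noteq> a) \<or> (q = a \<and> p \<noteq> a)" using pq by auto
  next
    assume h: "(p = a \<and> q \<noteq> a) \<or> (q = a \<and> p \<noteq> a)"
    then show "E p q"
    proof
      assume "p = a \<and> q \<noteq> a"
      moreover have "?R\<^sup>*\<^sup>* a q" using that(2) A by simp
      ultimately show ?thesis using claim[of q] by (auto simp: Rel_def)
    next
      assume "q = a \<and> p \<noteq> a"
      moreover have "?R\<^sup>*\<^sup>* a p" using that(1) A by simp
      ultimately have "E a p" using claim[of p] by (auto simp: Rel_def)
      then have "E p a" by (rule sg_sym[OF sg])
      then show ?thesis using \<open>q = a \<and> p \<noteq> a\<close> by simp
    qed
  qed
  have ba: "b \<noteq> a" using Eab sg_irr[OF sg] by auto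
  have "card (A - {a}) \<ge> 1"
  proof -
    have "b \<in> A - {a}" using bA ba by simp
    then have "A - {a} \<noteq> {}" by blast
    then show ?thesis using fin by (simp add: Suc_leI card_gt_0_iff)
  qed
  moreover have "induced_star V E A (card (A - {a}))"
    unfolding induced_star_def
  proof (intro conjI bexI[of _ a])
    show "\<forall>u\<in>A. \<forall>v\<in>A. E u v = (u = a \<and> v \<noteq> a \<or> v = a \<and> u \<noteq> a)"
      using edges by blast
  qed (use fin aA in auto)
  ultimately show ?thesis by blast
qed

lemma no_both:
  assumes sg: "simple_graph V E" and nc: "\<not> has_C6 V E"
    and ab: "Rel E (nbr2 V E x) a b" and e: "E x u" "E x w" "E u a" "E w b" "u \<noteq> w"
    and ac: "Rel E (nbr2 V E x) a c" "c \<noteq> b"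
    and bd: "Rel E (nbr2 V E x) b d" "d \<noteq> a"
  shows False
proof -
  have aN: "a \<in> nbr2 V E x" and bN: "b \<in> nbr2 V E x" and Eab: "E a b" using ab by (auto simp: Rel_def)
  have cN: "c \<in> nbr2 V E x" and Eac: "E a c" using ac by (auto simp: Rel_def)
  have dN: "d \<in> nbr2 V E x" and Ebd: "E b d" using bd by (auto simp: Rel_def)
  have Eba: "E b a" using sg_sym[OF sg Eab] .
  have Eca: "E c a" using sg_sym[OF sg Eac] .
  have Edb: "E d b" using sg_sym[OF sg Ebd] .
  obtain z where z: "E x z" "E z c" using N2D[OF cN] by blast
  have zw: "z = w"
  proof (rule ccontr)
    assume "z \<noteq> w"
    show False using L1[OF sg nc cN aN bN Eca Eab ac(2) z(1) e(2) z(2) e(4) \<open>z \<noteq> w\<close>] .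
  qed
  obtain z' where z': "E x z'" "E z' d" using N2D[OF dN] by blast
  have z'u: "z' = u"
  proof (rule ccontr)
    assume "z' \<noteq> u"
    show False using L1[OF sg nc dN bN aN Edb Eba bd(2) z'(1) e(1) z'(2) e(3) \<open>z' \<noteq> u\<close>] .
  qed
  have Ewc: "E w c" using z(2) zw by simp
  have Eud: "E u d" using z'(2) z'u by simp
  show False
  proof (cases "c = d")
    case True
    have Ecb: "E c b" using Edb True by simp
    have ca: "c \<noteq> a" using Eac sg_irr[OF sg] by auto
    show False using L1[OF sg nc cN bN aN Ecb Eba ca e(2) e(1) Ewc e(3)] e(5) by auto
  next
    case False
    show False using L2[OF sg nc cN aN bN dN Eca Eab Ebd ac(2) bd(2)[symmetric] False e(2) e(1) Ewc e(4) e(3) Eud] e(5) by auto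
  qed
qed

lemma comp_eq:
  assumes sg: "simple_graph V E" and A: "A = {v. (Rel E S)\<^sup>*\<^sup>* u0 v}" and aA: "a \<in> A"
  shows "A = {v. (Rel E S)\<^sup>*\<^sup>* a v}"
proof -
  have ua: "(Rel E S)\<^sup>*\<^sup>* u0 a" using aA A by simp
  have au: "(Rel E S)\<^sup>*\<^sup>* a u0" using rt_sym[OF sg ua] .
  show ?thesis
  proof (rule set_eqI, rule iffI)
    fix v assume "v \<in> A"
    then have "(Rel E S)\<^sup>*\<^sup>* u0 v" using A by simp
    then show "v \<in> {v. (Rel E S)\<^sup>*\<^sup>* a v}" using au by simp
  next
    fix v assume "v \<in> {v. (Rel E S)\<^sup>*\<^sup>* a v}"
    then have "(Rel E S)\<^sup>*\<^sup>* a v" by simp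
    then have "(Rel E S)\<^sup>*\<^sup>* u0 v" using ua by simp
    then show "v \<in> A" using A by simp
  qed
qed

theorem corollary2p6:
  fixes V :: "'a set" and E :: "'a \<Rightarrow> 'a \<Rightarrow> bool" and x :: 'a and A :: "'a set"
  assumes "simple_graph V E"
    and "\<not> has_C6 V E"
    and "x \<in> V"
    and "induced_component V E (nbr2 V E x) A"
  shows "card A = 1 \<or> card (nbr V E x \<inter> nbr_set V E A) = 1
         \<or> (\<exists>r\<ge>1. induced_star V E A r)"
proof (rule ccontr)
  note sg = assms(1) and nc = assms(2)
  let ?N = "nbr2 V E x"
  let ?R = "Rel E ?N"
  let ?U = "nbr V E x \<inter> nbr_set V E A"
  assume "\<not> ?thesis"
  then have cA: "card A \<noteq> 1" and cU: "card ?U \<noteq> 1" and ns: "\<not> (\<exists>r\<ge>1. induced_star V E A r)"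
    by blast+
  obtain u0 where u0N: "u0 \<in> ?N" and A0: "A = {v. (\<lambda>a b. E a b \<and> a \<in> ?N \<and> b \<in> ?N)\<^sup>*\<^sup>* u0 v}"
    using assms(4) unfolding induced_component_def by blast
  have "(\<lambda>a b. E a b \<and> a \<in> ?N \<and> b \<in> ?N) = ?R" by (simp add: Rel_def fun_eq_iff)
  with A0 have A: "A = {v. ?R\<^sup>*\<^sup>* u0 v}" by simp
  have u0A: "u0 \<in> A" using A by simp
  have AN: "A \<subseteq> ?N"
  proof
    fix v assume "v \<in> A"
    then have "?R\<^sup>*\<^sup>* u0 v" using A by simp
    from rt_mem[OF this u0N] show "v \<in> ?N" .
  qed
  have NV: "?N \<subseteq> V" by (auto simp: nbr2_def)
  have finV: "finite V" using sg by (simp add: simple_graph_def)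
  have finA: "finite A" using finite_subset[OF AN finite_subset[OF NV finV]] .
  obtain d where dA: "d \<in> A" and du0: "d \<noteq> u0"
  proof -
    have "A \<noteq> {u0}" using cA by auto
    then show ?thesis using u0A that by blast
  qed
  obtain u where u: "E x u" "E u u0" using N2D[OF u0N] by blast
  have uU: "u \<in> ?U"
  proof -
    have "u \<in> V" using sg_V[OF sg u(1)] by simp
    moreover have "u \<notin> A"
    proof
      assume "u \<in> A"
      then have "u \<in> ?N" using AN by blast
      then show False using N2D[of u V E x] u(1) by blast
    qed
    moreover have "E u0 u" using sg_sym[OF sg u(2)] .
    ultimately show ?thesis using u(1) u0A unfolding nbr_def nbr_set_def by blast
  qed
  have finU: "finite ?U"
  proof -
    have "?U \<subseteq> V" by (auto simp: nbr_def)
    then show ?thesis using finV by (rule finite_subset)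
  qed
  obtain w where wU: "w \<in> ?U" and wu: "w \<noteq> u"
  proof -
    have "?U \<noteq> {u}" using cU by auto
    then show ?thesis using uU that by blast
  qed
  obtain c0 where c0A: "c0 \<in> A" and Ewc0: "E w c0" and Exw: "E x w"
  proof -
    from wU have "E x w" and "\<exists>c\<in>A. E c w" unfolding nbr_def nbr_set_def by auto
    then obtain c where "c \<in> A" "E c w" by blast
    then show ?thesis using that[of c] sg_sym[OF sg \<open>E c w\<close>] \<open>E x w\<close> by blast
  qed
  define bad where "bad \<longleftrightarrow> (\<exists>a b u w. a \<in> A \<and> ?R a b \<and> E x u \<and> E x w \<and> E u a \<and> E w b \<and> u \<noteq> w)"
  have reach: "bad \<or> E u v" if "?R\<^sup>*\<^sup>* u0 v" for v
    using that
  proof (induction rule: rtranclp_induct)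
    case base then show ?case using u(2) by blast
  next
    case (step v v')
    have vA: "v \<in> A" using step.hyps(1) A by simp
    have v'N: "v' \<in> ?N" using step.hyps(2) by (simp add: Rel_def)
    obtain z where z: "E x z" "E z v'" using N2D[OF v'N] by blast
    show ?case
    proof (cases "bad")
      case True then show ?thesis by blast
    next
      case False
      with step.IH have Euv: "E u v" by blast
      show ?thesis
      proof (cases "z = u")
        case True then show ?thesis using z(2) by blast
      next
        case False
        have bad unfolding bad_def
          using vA step.hyps(2) u(1) z(1) Euv z(2) False by blast
        then show ?thesis by blast
      qed
    qed
  qed
  have isbad: bad
  proof -
    have "?R\<^sup>*\<^sup>* u0 c0" using c0A A by simp
    from reach[OF this] show bad
    proof
      assume Euc0: "E u c0"
      have "?R\<^sup>*\<^sup>* u0 d" using dA A by simp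
      moreover have "?R\<^sup>*\<^sup>* c0 u0" using rt_sym[OF sg \<open>?R\<^sup>*\<^sup>* u0 c0\<close>] .
      ultimately have rcd: "?R\<^sup>*\<^sup>* c0 d" by simp
      have "c0 \<noteq> d \<or> c0 \<noteq> u0" using du0 by blast
      obtain y where Rcy: "?R c0 y" and ry: "?R\<^sup>*\<^sup>* c0 y"
      proof (cases "c0 = d")
        case False
        from rcd False show ?thesis
          by (cases rule: converse_rtranclpE) (use that in blast)+
      next
        case True
        have "?R\<^sup>*\<^sup>* c0 u0" by fact
        from this du0 True show ?thesis
          by (cases rule: converse_rtranclpE) (use that in blast)+
      qed
      have yA: "y \<in> A"
      proof -
        have "?R\<^sup>*\<^sup>* u0 y" using \<open>?R\<^sup>*\<^sup>* u0 c0\<close> Rcy by simp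
        then show ?thesis using A by simp
      qed
      have Ryc: "?R y c0" using Rel_sym[OF sg Rcy] .
      have yN: "y \<in> ?N" using Rcy by (simp add: Rel_def)
      obtain z where z: "E x z" "E z y" using N2D[OF yN] by blast
      show bad
      proof (cases "z = u")
        case False
        then show bad unfolding bad_def using yA Ryc z u(1) Euc0 by blast
      next
        case True
        then show bad unfolding bad_def using yA Ryc z Exw Euc0 Ewc0 wu by blast
      qed
    qed (simp add: bad_def)
  qed
  then obtain a b u w where aA: "a \<in> A" and ab: "?R a b" and e: "E x u" "E x w" "E u a" "E w b" "u \<noteq> w"
    unfolding bad_def by blast
  have Aa: "A = {v. ?R\<^sup>*\<^sup>* a v}" using comp_eq[OF sg A aA] .
  show False
  proof (cases "\<forall>y. ?R b y \<longrightarrow> y = a")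
    case True
    from star_lemma[OF sg nc Aa ab e True] ns show False by blast
  next
    case False
    then obtain d where bd: "?R b d" "d \<noteq> a" by blast
    have aonly: "\<forall>y. ?R a y \<longrightarrow> y = b"
    proof (intro allI impI, rule ccontr)
      fix c assume "?R a c" "c \<noteq> b"
      from no_both[OF sg nc ab e this bd] show False .
    qed
    have bA: "b \<in> A" using Aa ab by simp
    have Ab: "A = {v. ?R\<^sup>*\<^sup>* b v}" using comp_eq[OF sg A bA] .
    have ba: "?R b a" using Rel_sym[OF sg ab] .
    from star_lemma[OF sg nc Ab ba e(2) e(1) e(4) e(3) e(5)[symmetric] aonly] ns show False by blast
  qed
qed

end
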